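(* Let $d\ge 1$, $\delta>0$, $N\ge 1$, let $\varphi_1,\dots,\varphi_N\in\mathbb{S}^{d-1}$ be arbitrary (deterministic) unit vectors, and let $\psi\in\mathbb{S}^{d-1}$. Let $\epsilon_1,\dots,\epsilon_N$ be i.i.d. random variables uniformly distributed on $[-\delta,\delta]$. Define $$P_N=\bigcap_{n=1}^N\{u\in\mathbb{R}^d:\ |\langle u,\varphi_n\rangle-\epsilon_n|\le\delta\},\qquad R_N(\psi)=\sup\{r\ge 0:\ r\psi\in P_N\}\in[0,\infty].$$ Then $$\mathbb{E}|R_N(\psi)|^2\ \ge\ \frac{8\delta^2}{(N+1)(N+2)}.$$
   Context: $P_N$ is the error polytope of consistent reconstruction: if $q_n=\langle x,\varphi_n\rangle+\epsilon_n$ and $\tilde x$ satisfies $|\langle\tilde x,\varphi_n\rangle-q_n|\le\delta$ for all $n$, then $x-\tilde x\in P_N$. $R_N(\psi)$ is the radial size of $P_N$ in the direction $\psi$. *)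

theory Defs
  imports "HOL-Probability.Probability"
begin

definition error_polytope :: "nat \<Rightarrow> (nat \<Rightarrow> 'a::euclidean_space) \<Rightarrow> real \<Rightarrow> (nat \<Rightarrow> real) \<Rightarrow> 'a set" where
  "error_polytope N \<phi> \<delta> e = (\<Inter>n\<in>{1..N}. {u. \<bar>inner u (\<phi> n) - e n\<bar> \<le> \<delta>})"

definition radial_size :: "nat \<Rightarrow> (nat \<Rightarrow> 'a::euclidean_space) \<Rightarrow> real \<Rightarrow> (nat \<Rightarrow> real) \<Rightarrow> 'a \<Rightarrow> ennreal" where
  "radial_size N \<phi> \<delta> e \<psi> = (SUP r\<in>{r::real. 0 \<le> r \<and> r *\<^sub>R \<psi> \<in> error_polytope N \<phi> \<delta> e}. ennreal r)"

end

theory Submission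
  imports Defs
begin

lemma layer_sq:
  fixes Z :: "'w \<Rightarrow> real"
  assumes "prob_space M" and Zm[measurable]: "Z \<in> borel_measurable M" and Zn: "\<And>w. 0 \<le> Z w"
  shows "(\<integral>\<^sup>+ w. ennreal ((Z w)^2) \<partial>M) =
    (\<integral>\<^sup>+ s. (ennreal (2 * s) * emeasure M {w\<in>space M. 0 \<le> s \<and> s \<le> Z w}) \<partial>lborel)"
proof -
  interpret prob_space M by fact
  interpret pair_sigma_finite M lborel by unfold_locales
  have pt: "ennreal ((Z w)^2) = (\<integral>\<^sup>+ s. ennreal (2 * s) * indicator {0..Z w} s \<partial>lborel)" for w
  proof -
    have "(\<integral>\<^sup>+ s. ennreal (2 * s) * indicator {0..Z w} s \<partial>lborel) = ennreal ((Z w)^2 - 0^2)"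
      by (rule nn_integral_FTC_Icc[where F="\<lambda>x. x^2"]) (auto intro!: derivative_eq_intros simp: Zn)
    then show ?thesis by simp
  qed
  have "(\<integral>\<^sup>+ w. ennreal ((Z w)^2) \<partial>M) = (\<integral>\<^sup>+ w. (\<integral>\<^sup>+ s. ennreal (2 * s) * indicator {0..Z w} s \<partial>lborel) \<partial>M)"
    by (simp add: pt)
  also have "\<dots> = (\<integral>\<^sup>+ s. (\<integral>\<^sup>+ w. ennreal (2 * s) * indicator {0..Z w} s \<partial>M) \<partial>lborel)"
  proof (rule Fubini'[symmetric])
    have "case_prod (\<lambda>w s. ennreal (2 * s) * indicator {0..Z w} s) = (\<lambda>p. ennreal (2 * snd p) * indicator {p. 0 \<le> snd p \<and> snd p \<le> Z (fst p)} p)"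
      by (auto simp: fun_eq_iff split: split_indicator)
    also have "\<dots> \<in> borel_measurable (M \<Otimes>\<^sub>M lborel)" by measurable
    finally show "case_prod (\<lambda>w s. ennreal (2 * s) * indicator {0..Z w} s) \<in> borel_measurable (M \<Otimes>\<^sub>M lborel)" .
  qed
  also have "\<dots> = (\<integral>\<^sup>+ s. (ennreal (2 * s) * emeasure M {w\<in>space M. 0 \<le> s \<and> s \<le> Z w}) \<partial>lborel)"
  proof (rule nn_integral_cong)
    fix s
    have "(\<integral>\<^sup>+ w. ennreal (2 * s) * indicator {0..Z w} s \<partial>M) = (\<integral>\<^sup>+ w. ennreal (2 * s) * indicator {w\<in>space M. 0 \<le> s \<and> s \<le> Z w} w \<partial>M)"
      by (rule nn_integral_cong) (auto split: split_indicator)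
    also have "\<dots> = ennreal (2 * s) * emeasure M {w\<in>space M. 0 \<le> s \<and> s \<le> Z w}"
      by (rule nn_integral_cmult_indicator) measurable
    finally show "(\<integral>\<^sup>+ w. ennreal (2 * s) * indicator {0..Z w} s \<partial>M) = ennreal (2 * s) * emeasure M {w\<in>space M. 0 \<le> s \<and> s \<le> Z w}" .
  qed
  finally show ?thesis .
qed

lemma unif_meas:
  fixes \<delta> L :: real and B :: "real set"
  assumes "\<delta> > 0" "B \<subseteq> {-\<delta>..\<delta>}" "B \<in> sets borel" "emeasure lborel B = ennreal L" "L \<ge> 0"
  shows "measure (uniform_measure lborel {-\<delta>..\<delta>}) B = L / (2*\<delta>)"
proof -
  have "{-\<delta>..\<delta>} \<inter> B = B" using assms by auto
  then have "emeasure (uniform_measure lborel {-\<delta>..\<delta>}) B = ennreal L / ennreal (2*\<delta>)"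
    using assms by (subst emeasure_uniform_measure) auto
  also have "\<dots> = ennreal (L / (2*\<delta>))" using assms by (intro divide_ennreal) auto
  finally show ?thesis using assms by (simp add: measure_def)
qed

lemma geom:
  fixes \<phi> :: "nat \<Rightarrow> 'a::euclidean_space" and \<psi> :: 'a
  assumes "\<forall>n\<in>{1..N}. norm (\<phi> n) = 1" "norm \<psi> = 1"
    and e: "\<forall>n\<in>{1..N}. \<bar>e n\<bar> \<le> \<delta>"
    and r: "0 \<le> r" "\<forall>n\<in>{1..N}. r \<le> \<delta> + (if inner \<psi> (\<phi> n) < 0 then -1 else 1) * e n"
  shows "r *\<^sub>R \<psi> \<in> error_polytope N \<phi> \<delta> e"
  unfolding error_polytope_def
proof (intro InterI, clarify)
  fix n assume n: "n \<in> {1..N}"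
  define a where "a = inner \<psi> (\<phi> n)"
  have "\<bar>a\<bar> \<le> norm \<psi> * norm (\<phi> n)" unfolding a_def by (rule Cauchy_Schwarz_ineq2)
  then have a1: "\<bar>a\<bar> \<le> 1" using assms n by simp
  have ra: "r * a \<le> r" "- r \<le> r * a" using a1 r(1)
    by (auto simp: abs_le_iff intro: mult_left_le  mult_left_mono[of "-1" a r, simplified])
  have en: "\<bar>e n\<bar> \<le> \<delta>" using e n by auto
  have rn: "r \<le> \<delta> + (if a < 0 then -1 else 1) * e n" using r n a_def by auto
  have "inner (r *\<^sub>R \<psi>) (\<phi> n) = r * a" by (simp add: a_def)
  moreover have "\<bar>r * a - e n\<bar> \<le> \<delta>"
  proof (cases "a < 0")
    case True
    then have ra0: "r * a \<le> 0" using r(1) by (simp add: mult_nonneg_nonpos)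
    have "r \<le> \<delta> - e n" using rn True by simp
    then show ?thesis using ra0 ra en by (auto simp: abs_le_iff)
  next
    case False
    then have ra0: "r * a \<ge> 0" using r(1) by simp
    have "r \<le> \<delta> + e n" using rn False by simp
    then show ?thesis using ra0 ra en by (auto simp: abs_le_iff)
  qed
  ultimately show "\<bar>inner (r *\<^sub>R \<psi>) (\<phi> n) - e n\<bar> \<le> \<delta>" by (simp only:)
qed

lemma alg: fixes c n x p :: real assumes "c > 0" "n \<ge> 0"
  shows "((1 + n) * (p * (2 * x)) - 2 * c * ((1 - x / c) * p)) / (n + 1) +
     (2 + n) * ((1 - x / c) * (p * (2 * c\<^sup>2))) / (c * ((n + 1) * (n + 2))) = 2 * x * p"
proof -
  have nz: "n + 1 \<noteq> 0" "n + 2 \<noteq> 0" "c \<noteq> 0" using assms by auto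
  have "(2 + n) * ((1 - x / c) * (p * (2 * c\<^sup>2))) / (c * ((n + 1) * (n + 2))) = 2 * c * ((1 - x / c) * p) / (n + 1)"
    using assms nz by (simp add: divide_simps power2_eq_square add_pos_nonneg)
  moreover have "((1 + n) * (p * (2 * x)) - 2 * c * ((1 - x / c) * p)) / (n + 1) = 2 * x * p - 2 * c * ((1 - x / c) * p) / (n + 1)"
    using assms nz by (simp add: divide_simps add_pos_nonneg)
  ultimately show ?thesis by simp
qed
theorem proposition3p1:
  fixes M :: "'w measure" and \<epsilon> :: "nat \<Rightarrow> 'w \<Rightarrow> real"
    and \<phi> :: "nat \<Rightarrow> 'a::euclidean_space" and \<psi> :: 'a
    and \<delta> :: real and N :: nat
  assumes "prob_space M"
    and "\<delta> > 0" and "N \<ge> 1"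
    and "\<forall>n\<in>{1..N}. norm (\<phi> n) = 1" and "norm \<psi> = 1"
    and "prob_space.indep_vars M (\<lambda>_. borel) \<epsilon> {1..N}"
    and "\<forall>n\<in>{1..N}. distr M borel (\<epsilon> n) = uniform_measure lborel {-\<delta>..\<delta>}"
  shows "(\<integral>\<^sup>+ \<omega>. (radial_size N \<phi> \<delta> (\<lambda>n. \<epsilon> n \<omega>) \<psi>)\<^sup>2 \<partial>M)
           \<ge> ennreal (8 * \<delta>\<^sup>2 / ((real N + 1) * (real N + 2)))"
proof -
  interpret prob_space M by fact
  note indep = assms(6)
  have em: "\<epsilon> n \<in> borel_measurable M" if "n \<in> {1..N}" for n
    using indep that unfolding indep_vars_def by auto
  define sg where "sg n = (if inner \<psi> (\<phi> n) < 0 then -1 else (1::real))" for n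
  define G where "G w = (\<forall>n\<in>{1..N}. \<bar>\<epsilon> n w\<bar> \<le> \<delta>)" for w
  define Y where "Y w = Min ((\<lambda>n. \<delta> + sg n * \<epsilon> n w) ` {1..N})" for w
  define Z where "Z w = (if G w then Y w else 0)" for w
  define c where "c = 2 * \<delta>"
  have ne: "{1..N} \<noteq> {}" using assms(3) by auto
  have sg1: "sg n = 1 \<or> sg n = -1" for n by (auto simp: sg_def)
  have Zn: "0 \<le> Z w" for w
  proof (cases "G w")
    case True
    have "\<forall>n\<in>{1..N}. 0 \<le> \<delta> + sg n * \<epsilon> n w"
    proof
      fix n assume "n \<in> {1..N}"
      then have "\<bar>\<epsilon> n w\<bar> \<le> \<delta>" using True unfolding G_def by auto
      then show "0 \<le> \<delta> + sg n * \<epsilon> n w" using sg1[of n] by (auto simp: abs_le_iff)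
    qed
    then show ?thesis using True ne by (simp add: Z_def Y_def)
  qed (simp add: Z_def)
  have Zm: "Z \<in> borel_measurable M"
  proof -
    have Ym: "Y \<in> borel_measurable M" unfolding Y_def
      by (rule borel_measurable_Min) (auto intro!: borel_measurable_add borel_measurable_times em)
    have "{w \<in> space M. G w} = (\<Inter>n\<in>{1..N}. {w\<in>space M. \<bar>\<epsilon> n w\<bar> \<le> \<delta>})" using ne
      by (auto simp: G_def)
    also have "\<dots> \<in> sets M" using ne
      by (intro sets.finite_INT) (auto intro!: borel_measurable_le borel_measurable_abs em)
    finally have "{w \<in> space M. G w} \<in> sets M" .
    then show ?thesis unfolding Z_def
      by (rule measurable_If[OF Ym borel_measurable_const])
  qed
  have ZR: "ennreal (Z w) \<le> radial_size N \<phi> \<delta> (\<lambda>n. \<epsilon> n w) \<psi>" for w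
  proof (cases "G w")
    case True
    have "Y w *\<^sub>R \<psi> \<in> error_polytope N \<phi> \<delta> (\<lambda>n. \<epsilon> n w)"
    proof (rule geom[OF assms(4,5)])
      show "\<forall>n\<in>{1..N}. \<bar>\<epsilon> n w\<bar> \<le> \<delta>" using True by (simp add: G_def)
      show "0 \<le> Y w" using Zn[of w] True by (simp add: Z_def)
      show "\<forall>n\<in>{1..N}. Y w \<le> \<delta> + (if inner \<psi> (\<phi> n) < 0 then -1 else 1) * \<epsilon> n w"
        unfolding Y_def sg_def[symmetric] by (auto intro: Min_le)
    qed
    then have "ennreal (Y w) \<le> radial_size N \<phi> \<delta> (\<lambda>n. \<epsilon> n w) \<psi>"
      unfolding radial_size_def using Zn[of w] True
      by (intro SUP_upper) (auto simp: Z_def)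
    then show ?thesis using True by (simp add: Z_def)
  qed (simp add: Z_def)
  have meas: "ennreal ((1 - s / c) ^ N) \<le> emeasure M {w\<in>space M. 0 \<le> s \<and> s \<le> Z w}"
    if s: "0 \<le> s" "s < c" for s
  proof -
    define B where "B n = (if sg n = 1 then {s-\<delta><..\<delta>} else {-\<delta>..<\<delta>-s})" for n
    have Bs: "B n \<in> sets borel" for n by (simp add: B_def)
    have sub: "(\<Inter>n\<in>{1..N}. \<epsilon> n -` B n \<inter> space M) \<subseteq> {w\<in>space M. 0 \<le> s \<and> s \<le> Z w}"
    proof
      fix w assume "w \<in> (\<Inter>n\<in>{1..N}. \<epsilon> n -` B n \<inter> space M)"
      then have w: "\<forall>n\<in>{1..N}. w \<in> \<epsilon> n -` B n \<inter> space M" by auto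
      have wn: "s \<le> \<delta> + sg n * \<epsilon> n w \<and> \<bar>\<epsilon> n w\<bar> \<le> \<delta>" if "n \<in> {1..N}" for n
      proof -
        have "\<epsilon> n w \<in> B n" using w that by auto
        then show ?thesis using sg1[of n] s unfolding B_def
          by (auto split: if_splits)
      qed
      then have wG: "G w" unfolding G_def by auto
      have "\<forall>n\<in>{1..N}. s \<le> \<delta> + sg n * \<epsilon> n w" using wn by auto
      then have "s \<le> Y w" using ne unfolding Y_def by simp
      then show "w \<in> {w\<in>space M. 0 \<le> s \<and> s \<le> Z w}" using w ne wG s by (auto simp: Z_def)
    qed
    have "prob (\<Inter>n\<in>{1..N}. \<epsilon> n -` B n \<inter> space M) = (\<Prod>n\<in>{1..N}. prob (\<epsilon> n -` B n \<inter> space M))"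
      by (rule indep_varsD[OF indep ne]) (auto simp: Bs)
    also have "\<dots> = (\<Prod>n\<in>{1..N}. (1 - s / c))"
    proof (rule prod.cong[OF refl])
      fix n assume n: "n \<in> {1..N}"
      have "prob (\<epsilon> n -` B n \<inter> space M) = measure (distr M borel (\<epsilon> n)) (B n)"
        by (rule measure_distr[symmetric]) (auto simp: em[OF n] Bs)
      also have "\<dots> = measure (uniform_measure lborel {-\<delta>..\<delta>}) (B n)" using assms(7) n by simp
      also have "\<dots> = (c - s) / (2 * \<delta>)"
        using sg1[of n] s assms(2) by (intro unif_meas) (auto simp: B_def c_def)
      also have "\<dots> = 1 - s / c" using assms(2) by (simp add: c_def field_simps)
      finally show "prob (\<epsilon> n -` B n \<inter> space M) = 1 - s / c" .
    qed
    also have "\<dots> = (1 - s / c) ^ N" by simp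
    finally have "emeasure M (\<Inter>n\<in>{1..N}. \<epsilon> n -` B n \<inter> space M) = ennreal ((1 - s / c) ^ N)"
      by (simp add: emeasure_eq_measure)
    moreover have "emeasure M (\<Inter>n\<in>{1..N}. \<epsilon> n -` B n \<inter> space M) \<le> emeasure M {w\<in>space M. 0 \<le> s \<and> s \<le> Z w}"
      by (rule emeasure_mono[OF sub]) (use Zm in measurable)
    ultimately show ?thesis by simp
  qed
  define F where "F x = -2*c*x*(1-x/c)^(Suc N)/(real N+1) - 2*c^2*(1-x/c)^(Suc (Suc N))/((real N+1)*(real N+2))" for x :: real
  have cpos: "c > 0" using assms(2) by (simp add: c_def)
  have FTC: "(\<integral>\<^sup>+ s. ennreal (2 * s * (1 - s / c) ^ N) * indicator {0..c} s \<partial>lborel) = ennreal (F c - F 0)"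
  proof (rule nn_integral_FTC_Icc)
    show "(\<lambda>s. 2 * s * (1 - s / c) ^ N) \<in> borel_measurable borel" by measurable
    show "0 \<le> 2 * x * (1 - x / c) ^ N" if "x \<in> {0..c}" for x
      using that cpos by (auto intro!: mult_nonneg_nonneg zero_le_power simp: field_simps)
    show "0 \<le> c" using cpos by simp
    show "(F has_real_derivative 2 * x * (1 - x / c) ^ N) (at x)" for x
      unfolding F_def
      apply (insert cpos)
      apply (rule derivative_eq_intros refl | simp)+
      apply (rule alg) by auto
  qed
  have Fval: "F c - F 0 = 8 * \<delta>\<^sup>2 / ((real N + 1) * (real N + 2))"
    using cpos by (simp add: F_def c_def field_simps power2_eq_square)
  have "ennreal (8 * \<delta>\<^sup>2 / ((real N + 1) * (real N + 2))) = (\<integral>\<^sup>+ s. ennreal (2 * s * (1 - s / c) ^ N) * indicator {0..c} s \<partial>lborel)"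
    using FTC Fval by simp
  also have "\<dots> \<le> (\<integral>\<^sup>+ s. (ennreal (2 * s) * emeasure M {w\<in>space M. 0 \<le> s \<and> s \<le> Z w}) \<partial>lborel)"
  proof (rule nn_integral_mono)
    fix s
    show "ennreal (2 * s * (1 - s / c) ^ N) * indicator {0..c} s \<le> ennreal (2 * s) * emeasure M {w\<in>space M. 0 \<le> s \<and> s \<le> Z w}"
    proof (cases "s \<in> {0..<c}")
      case True
      have "ennreal (2 * s * (1 - s / c) ^ N) * indicator {0..c} s = ennreal (2 * s * (1 - s / c) ^ N)"
        using True by (simp add: indicator_def)
      also have "ennreal (2 * s * (1 - s / c) ^ N) = ennreal (2 * s) * ennreal ((1 - s / c) ^ N)"
        using cpos True by (subst ennreal_mult[symmetric]) auto
      also have "\<dots> \<le> ennreal (2 * s) * emeasure M {w\<in>space M. 0 \<le> s \<and> s \<le> Z w}"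
        using True by (intro mult_left_mono meas) auto
      finally show ?thesis .
    next
      case False
      have "s = c \<or> s \<notin> {0..c}" using False by auto
      then show ?thesis using cpos assms(3) by (auto simp: indicator_def power_0_left)
    qed
  qed
  also have "\<dots> = (\<integral>\<^sup>+ w. ennreal ((Z w)^2) \<partial>M)"
    by (rule layer_sq[symmetric, OF assms(1) Zm Zn])
  also have "\<dots> \<le> (\<integral>\<^sup>+ \<omega>. (radial_size N \<phi> \<delta> (\<lambda>n. \<epsilon> n \<omega>) \<psi>)\<^sup>2 \<partial>M)"
  proof (rule nn_integral_mono)
    fix w
    have "ennreal ((Z w)^2) = (ennreal (Z w))^2" using Zn[of w] by (simp add: ennreal_power)
    also have "\<dots> \<le> (radial_size N \<phi> \<delta> (\<lambda>n. \<epsilon> n w) \<psi>)\<^sup>2"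
      by (intro power_mono ZR) simp
    finally show "ennreal ((Z w)^2) \<le> (radial_size N \<phi> \<delta> (\<lambda>n. \<epsilon> n w) \<psi>)\<^sup>2" .
  qed
  finally show ?thesis .
qed

end
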